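(* Let $\lambda,\nu$ be partitions and $k,\ell,m_1$ nonnegative integers with $\ell+m_1\le k$, and set $m_2=k-\ell-m_1$. Then the set of partitions $\mu$ such that $(\lambda,\mu,\nu)$ is an $sp$-bumping sequence with $|\lambda/\mu|=\ell$ and $|\nu/\mu|=k-\ell$ is in bijection with the set of pairs of partitions $(\mu^\circ,\mu^-)$ such that $(\lambda,\mu^\circ,\mu^-,\nu)$ is an $spo$-bumping sequence with $|\mu^\circ/\lambda|=m_1$, $|\mu^\circ/\mu^-|=\ell$ and $|\nu/\mu^-|=m_2$.
   Context: Partitions are identified with Young diagrams (English convention, rows numbered from the top, columns from the left); $\lambda_1$ is the length of the first row; $\mu\subseteq\lambda$ means $\mu_i\le\lambda_i$ for all $i$, $|\lambda/\mu|=|\lambda|-|\mu|$, and $\lambda/\mu$ is a horizontal strip if no two boxes of $\lambda/\mu$ lie in the same column. An $sp$-bumping sequence is a triple $(\lambda,\mu,\nu)$ of partitions with $\mu\subseteq\lambda$, $\mu\subseteq\nu$, and $\lambda/\mu$, $\nu/\mu$ horizontal strips. An $spo$-bumping sequence is a quadruple $(\lambda,\mu^\circ,\mu^-,\nu)$ of partitions with $\lambda\subseteq\mu^\circ$, $\mu^-\subseteq\mu^\circ$, $\mu^-\subseteq\nu$ such that: (1) $\mu^\circ/\lambda$, $\mu^\circ/\mu^-$ and $\nu/\mu^-$ are horizontal strips; (2) if $\lambda_1\neq\mu^\circ_1$ then $\mu^\circ_1=\mu^-_1$; (3) if $\nu/\mu^-$ and $\mu^\circ/\lambda$ are both nonempty,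 the leftmost box of $\nu/\mu^-$ lies in a column strictly to the right of the rightmost box of $\mu^\circ/\lambda$. *)

theory Defs
  imports Main
begin

text \<open>A partition is a weakly decreasing finite list of positive integers
  (its parts / row lengths, top row first). Rows are indexed from 0.\<close>

definition is_partition :: "nat list \<Rightarrow> bool" where
  "is_partition la \<longleftrightarrow> sorted_wrt (\<ge>) la \<and> (\<forall>x\<in>set la. 0 < x)"

definition part :: "nat list \<Rightarrow> nat \<Rightarrow> nat" where
  "part la i = (if i < length la then la ! i else 0)"

definition size_part :: "nat list \<Rightarrow> nat" where
  "size_part la = sum_list la"

definition contained :: "nat list \<Rightarrow> nat list \<Rightarrow> bool" where
  "contained mu la \<longleftrightarrow> (\<forall>i. part mu i \<le> part la i)"

text \<open>Boxes of the skew diagram la/mu: (row i, column j) with columns numbered from 1.\<close>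
definition skew_boxes :: "nat list \<Rightarrow> nat list \<Rightarrow> (nat \<times> nat) set" where
  "skew_boxes la mu = {(i, j). part mu i < j \<and> j \<le> part la i}"

definition skew_size :: "nat list \<Rightarrow> nat list \<Rightarrow> nat" where
  "skew_size la mu = size_part la - size_part mu"

definition horizontal_strip :: "nat list \<Rightarrow> nat list \<Rightarrow> bool" where
  "horizontal_strip la mu \<longleftrightarrow> contained mu la \<and>
     (\<forall>i j i' j'. (i, j) \<in> skew_boxes la mu \<and> (i', j') \<in> skew_boxes la mu \<and> j = j' \<longrightarrow> i = i')"

definition sp_bumping :: "nat list \<Rightarrow> nat list \<Rightarrow> nat list \<Rightarrow> bool" where
  "sp_bumping la mu nu \<longleftrightarrow> is_partition la \<and> is_partition mu \<and> is_partition nu \<and>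
     contained mu la \<and> contained mu nu \<and> horizontal_strip la mu \<and> horizontal_strip nu mu"

definition spo_bumping :: "nat list \<Rightarrow> nat list \<Rightarrow> nat list \<Rightarrow> nat list \<Rightarrow> bool" where
  "spo_bumping la muo mum nu \<longleftrightarrow>
     is_partition la \<and> is_partition muo \<and> is_partition mum \<and> is_partition nu \<and>
     contained la muo \<and> contained mum muo \<and> contained mum nu \<and>
     horizontal_strip muo la \<and> horizontal_strip muo mum \<and> horizontal_strip nu mum \<and>
     (part la 0 \<noteq> part muo 0 \<longrightarrow> part muo 0 = part mum 0) \<and>
     (skew_boxes nu mum \<noteq> {} \<and> skew_boxes muo la \<noteq> {} \<longrightarrow>
        (\<forall>b\<in>skew_boxes nu mum. \<forall>c\<in>skew_boxes muo la. snd c < snd b))"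

end

theory Submission
  imports Defs
begin


definition hsF :: "(nat \<Rightarrow> nat) \<Rightarrow> (nat \<Rightarrow> nat) \<Rightarrow> bool" where
  "hsF A B \<longleftrightarrow> (\<forall>i. B i \<le> A i \<and> A (Suc i) \<le> B i)"

lemma sum_upd_nat:
  fixes f :: "nat \<Rightarrow> nat"
  assumes "q < N"
  shows "sum (f(q := v)) {..<N} + f q = sum f {..<N} + v"
proof -
  have q: "q \<in> {..<N}" using assms by simp
  have "sum (f(q := v)) {..<N} = v + sum (f(q := v)) ({..<N} - {q})"
    using sum.remove[OF _ q, of "f(q := v)"] by simp
  moreover have "sum f {..<N} = f q + sum f ({..<N} - {q})"
    using sum.remove[OF _ q, of f] by simp
  moreover have "sum (f(q := v)) ({..<N} - {q}) = sum f ({..<N} - {q})"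
    by (rule sum.cong) auto
  ultimately show ?thesis by simp
qed

lemma hsF_anti: "hsF A B \<Longrightarrow> j \<le> i \<Longrightarrow> B i \<le> B j"
  unfolding hsF_def by (rule lift_Suc_antimono_le[of B]) (auto intro: le_trans)

lemma hsF_antiA: "hsF A B \<Longrightarrow> j \<le> i \<Longrightarrow> A i \<le> A j"
  unfolding hsF_def by (rule lift_Suc_antimono_le[of A]) (auto intro: le_trans)

locale fw =
  fixes La V :: "nat \<Rightarrow> nat" and N l n :: nat
  assumes La_anti: "\<And>i. La (Suc i) \<le> La i"
    and La_zero: "\<And>i. N \<le> Suc i \<Longrightarrow> La i = 0"
    and V_zero: "\<And>i. N \<le> i \<Longrightarrow> V i = 0"
    and N_pos: "0 < N"
begin

definition sz :: "(nat \<Rightarrow> nat) \<Rightarrow> nat" where "sz f = sum f {..<N}"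

definition RF :: "nat \<Rightarrow> ((nat \<Rightarrow> nat) \<times> (nat \<Rightarrow> nat)) set" where
  "RF m = {(X, Y). hsF X La \<and> hsF X Y \<and> hsF V Y \<and> (La 0 \<noteq> X 0 \<longrightarrow> X 0 = Y 0) \<and>
     (\<forall>a b. La a < X a \<and> Y b < V b \<longrightarrow> X a \<le> Y b) \<and>
     sz X = sz La + m \<and> sz X = sz Y + l \<and> sz V = sz Y + (n - m)}"

definition LF :: "(nat \<Rightarrow> nat) set" where
  "LF = {Y. hsF La Y \<and> hsF V Y \<and> sz La = sz Y + l \<and> sz V = sz Y + n}"

lemma sz_inc: "q < N \<Longrightarrow> sz (f(q := Suc (f q))) = Suc (sz f)"
  unfolding sz_def using sum_upd_nat[of q N f "Suc (f q)"] by simp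

lemma sz_dec: "q < N \<Longrightarrow> 0 < f q \<Longrightarrow> Suc (sz (f(q := f q - 1))) = sz f"
  unfolding sz_def using sum_upd_nat[of q N f "f q - 1"] by simp

lemma sz_mono: "(\<And>i. f i \<le> g i) \<Longrightarrow> sz f \<le> sz g"
  unfolding sz_def by (rule sum_mono) auto

definition rr :: "(nat \<Rightarrow> nat) \<Rightarrow> nat" where "rr Y = (GREATEST j. Y j < V j)"
definition ii :: "(nat \<Rightarrow> nat) \<Rightarrow> nat" where "ii X = (LEAST i. La i < X i)"

definition phi :: "(nat \<Rightarrow> nat) \<times> (nat \<Rightarrow> nat) \<Rightarrow> (nat \<Rightarrow> nat) \<times> (nat \<Rightarrow> nat)" where
  "phi p = (case p of (X, Y) \<Rightarrow> (let r = rr Y in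
     (if X r = Y r then X(r := Suc (X r)) else X(Suc r := Suc (X (Suc r))), Y(r := Suc (Y r)))))"

definition psi :: "(nat \<Rightarrow> nat) \<times> (nat \<Rightarrow> nat) \<Rightarrow> (nat \<Rightarrow> nat) \<times> (nat \<Rightarrow> nat)" where
  "psi p = (case p of (X, Y) \<Rightarrow> (let i = ii X in
     (X(i := X i - 1), if X i = Y i then Y(i := Y i - 1) else Y(i - 1 := Y (i - 1) - 1))))"

lemma rr_props:
  assumes "Y j < V j"
  shows "Y (rr Y) < V (rr Y)" "\<And>j'. rr Y < j' \<Longrightarrow> \<not> Y j' < V j'" "rr Y < N"
proof -
  have b: "\<And>y. Y y < V y \<Longrightarrow> y \<le> N" using V_zero by (metis not_less0 not_le less_imp_le)
  show 1: "Y (rr Y) < V (rr Y)" unfolding rr_def by (rule GreatestI_nat[of "\<lambda>j. Y j < V j", OF assms b])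
  show "\<And>j'. rr Y < j' \<Longrightarrow> \<not> Y j' < V j'"
    unfolding rr_def using Greatest_le_nat[of "\<lambda>j. Y j < V j", OF _ b] by (meson not_le)
  show "rr Y < N" using 1 V_zero by (metis not_less0 not_le)
qed

lemma ii_props:
  assumes "La j < X j"
  shows "La (ii X) < X (ii X)" "\<And>j'. j' < ii X \<Longrightarrow> \<not> La j' < X j'"
  unfolding ii_def using LeastI[of "\<lambda>i. La i < X i", OF assms] not_less_Least by auto


lemma RF_D:
  assumes "(X, Y) \<in> RF m"
  shows "hsF X La" "hsF X Y" "hsF V Y" "La 0 \<noteq> X 0 \<Longrightarrow> X 0 = Y 0"
    "\<And>a b. La a < X a \<Longrightarrow> Y b < V b \<Longrightarrow> X a \<le> Y b"
    "sz X = sz La + m" "sz X = sz Y + l" "sz V = sz Y + (n - m)"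
  using assms unfolding RF_def by auto

lemma phi_facts:
  assumes A: "(X, Y) \<in> RF m" and mn: "m < n"
  shows "Y (rr Y) < V (rr Y)" "\<And>j. rr Y < j \<Longrightarrow> Y j = V j" "rr Y < N"
    "\<And>j. j < rr Y \<Longrightarrow> Suc (Y (rr Y)) \<le> Y j"
    "\<And>i. rr Y = Suc i \<Longrightarrow> V (rr Y) \<le> Y i"
    "\<And>a. La a < X a \<Longrightarrow> X a \<le> Y (rr Y)"
proof -
  note D = RF_D[OF A]
  have ex: "\<exists>j. Y j < V j"
  proof (rule ccontr)
    assume "\<not> ?thesis"
    then have "sz V \<le> sz Y" by (intro sz_mono) (auto simp: not_less)
    with D(8) mn show False by simp
  qed
  then obtain j0 where j0: "Y j0 < V j0" by blast
  note R = rr_props[of Y j0, OF j0]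
  show "Y (rr Y) < V (rr Y)" "rr Y < N" using R by auto
  show "\<And>j. rr Y < j \<Longrightarrow> Y j = V j"
    using R(2) D(3) unfolding hsF_def by (meson le_antisym not_less)
  show v: "\<And>i. rr Y = Suc i \<Longrightarrow> V (rr Y) \<le> Y i" using D(3) unfolding hsF_def by metis
  show "\<And>j. j < rr Y \<Longrightarrow> Suc (Y (rr Y)) \<le> Y j"
  proof -
    fix j assume j: "j < rr Y"
    then obtain i where i: "rr Y = Suc i" "j \<le> i" by (metis less_imp_Suc_add le_add1)
    have "Y i \<le> Y j" using hsF_anti[OF D(2) i(2)] .
    with v[OF i(1)] R(1) show "Suc (Y (rr Y)) \<le> Y j" by simp
  qed
  show "\<And>a. La a < X a \<Longrightarrow> X a \<le> Y (rr Y)" using D(5) R(1) by blast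
qed

lemma phi_into:
  assumes A: "(X, Y) \<in> RF m" and mn: "m < n"
  shows "phi (X, Y) \<in> RF (Suc m)"
proof -
  note D = RF_D[OF A]
  note F = phi_facts[OF A mn]
  define r where "r = rr Y"
  have Fr: "Y r < V r" "\<And>j. r < j \<Longrightarrow> Y j = V j" "r < N"
    "\<And>j. j < r \<Longrightarrow> Suc (Y r) \<le> Y j" "\<And>i. r = Suc i \<Longrightarrow> V r \<le> Y i"
    "\<And>a. La a < X a \<Longrightarrow> X a \<le> Y r" using F unfolding r_def by auto
  define Y' where "Y' = Y(r := Suc (Y r))"
  have Y'b: "\<And>b. Y' b < V b \<Longrightarrow> Suc (Y r) \<le> Y' b"
  proof -
    fix b assume b: "Y' b < V b"
    show "Suc (Y r) \<le> Y' b"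
    proof (cases "b < r")
      case True then show ?thesis using Fr(4) unfolding Y'_def by auto
    next
      case False
      show ?thesis
      proof (cases "b = r")
        case True then show ?thesis unfolding Y'_def by simp
      next
        case False2: False
        with False have "r < b" by simp
        then have "Y' b = V b" using Fr(2) unfolding Y'_def by simp
        with b show ?thesis by simp
      qed
    qed
  qed
  have hVY': "hsF V Y'" using D(3) Fr(1) unfolding hsF_def Y'_def
    by (auto simp: le_SucI Suc_le_eq)
  have szY': "sz Y' = Suc (sz Y)" unfolding Y'_def using sz_inc[OF Fr(3)] .
  show ?thesis
  proof (cases "X r = Y r")
    case True
    define X' where "X' = X(r := Suc (X r))"
    have up: "\<And>i. r = Suc i \<Longrightarrow> Suc (X r) \<le> La i \<and> Suc (X r) \<le> Y i"
    proof -
      fix i assume i: "r = Suc i"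
      have vi: "V r \<le> Y i" using Fr(5)[OF i] .
      have "Suc (X r) \<le> Y i" using vi Fr(1) True by simp
      moreover have "Y i \<le> X i" using D(2) unfolding hsF_def by blast
      moreover have "La i = X i"
      proof (rule ccontr)
        assume "La i \<noteq> X i"
        then have "La i < X i" using D(1) unfolding hsF_def by (metis le_neq_implies_less)
        then have "X i \<le> Y r" using Fr(6) by blast
        with calculation True show False by simp
      qed
      ultimately show "Suc (X r) \<le> La i \<and> Suc (X r) \<le> Y i" by simp
    qed
    have phi: "phi (X, Y) = (X', Y')" unfolding phi_def Let_def
      using True by (simp add: r_def X'_def Y'_def)
    have h1: "hsF X' La" using D(1) up unfolding hsF_def X'_def
      by (auto simp: le_SucI)
    have h2: "hsF X' Y'" using D(2) up True unfolding hsF_def X'_def Y'_def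
      by (auto simp: le_SucI)
    have c2: "La 0 \<noteq> X' 0 \<longrightarrow> X' 0 = Y' 0" using D(4) True unfolding X'_def Y'_def by auto
    have c3: "\<forall>a b. La a < X' a \<and> Y' b < V b \<longrightarrow> X' a \<le> Y' b"
    proof (intro allI impI, elim conjE)
      fix a b assume a: "La a < X' a" and b: "Y' b < V b"
      have yb: "Suc (Y r) \<le> Y' b" using Y'b[OF b] .
      show "X' a \<le> Y' b"
      proof (cases "a = r")
        case True then show ?thesis using yb \<open>X r = Y r\<close> unfolding X'_def by simp
      next
        case False
        then have "La a < X a" "X' a = X a" using a unfolding X'_def by auto
        then show ?thesis using Fr(6) yb by fastforce
      qed
    qed
    have szX': "sz X' = Suc (sz X)" unfolding X'_def using sz_inc[OF Fr(3)] .
    show ?thesis unfolding phi RF_def using h1 h2 hVY' c2 c3 szX' szY' D(6,7,8) mn by auto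
  next
    case False
    define X' where "X' = X(Suc r := Suc (X (Suc r)))"
    have XY: "Y r < X r" using False D(2) unfolding hsF_def by (metis le_neq_implies_less)
    have Lr: "La r = X r"
    proof (rule ccontr)
      assume "La r \<noteq> X r"
      then have "La r < X r" using D(1) unfolding hsF_def by (metis le_neq_implies_less)
      then have "X r \<le> Y r" using Fr(6) by blast
      with XY show False by simp
    qed
    have x1: "X (Suc r) \<le> Y r" using D(2) unfolding hsF_def by blast
    have SrN: "Suc r < N"
    proof (rule ccontr)
      assume "\<not> Suc r < N"
      then have "La r = 0" using La_zero by simp
      with Lr XY show False by simp
    qed
    have phi: "phi (X, Y) = (X', Y')" unfolding phi_def Let_def
      using False by (simp add: r_def X'_def Y'_def)
    have h1: "hsF X' La" using D(1) x1 XY Lr unfolding hsF_def X'_def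
      by (auto simp: le_SucI)
    have h2: "hsF X' Y'" using D(2) x1 XY unfolding hsF_def X'_def Y'_def
      by (auto simp: le_SucI)
    have c2: "La 0 \<noteq> X' 0 \<longrightarrow> X' 0 = Y' 0" using D(4) Lr unfolding X'_def Y'_def by auto
    have c3: "\<forall>a b. La a < X' a \<and> Y' b < V b \<longrightarrow> X' a \<le> Y' b"
    proof (intro allI impI, elim conjE)
      fix a b assume a: "La a < X' a" and b: "Y' b < V b"
      have yb: "Suc (Y r) \<le> Y' b" using Y'b[OF b] .
      show "X' a \<le> Y' b"
      proof (cases "a = Suc r")
        case True then show ?thesis using yb x1 unfolding X'_def by simp
      next
        case False
        then have "La a < X a" "X' a = X a" using a unfolding X'_def by auto
        then show ?thesis using Fr(6) yb by fastforce
      qed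
    qed
    have szX': "sz X' = Suc (sz X)" unfolding X'_def using sz_inc[OF SrN] .
    show ?thesis unfolding phi RF_def using h1 h2 hVY' c2 c3 szX' szY' D(6,7,8) mn by auto
  qed
qed


lemma psi_phi:
  assumes A: "(X, Y) \<in> RF m" and mn: "m < n"
  shows "psi (phi (X, Y)) = (X, Y)"
proof -
  note D = RF_D[OF A]
  note F = phi_facts[OF A mn]
  define r where "r = rr Y"
  have Fr: "Y r < V r" "\<And>j. r < j \<Longrightarrow> Y j = V j" "r < N"
    "\<And>j. j < r \<Longrightarrow> Suc (Y r) \<le> Y j" "\<And>i. r = Suc i \<Longrightarrow> V r \<le> Y i"
    "\<And>a. La a < X a \<Longrightarrow> X a \<le> Y r" using F unfolding r_def by auto
  have below: "\<And>a. a < r \<Longrightarrow> \<not> La a < X a"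
  proof
    fix a assume a: "a < r" "La a < X a"
    have "X a \<le> Y r" using Fr(6) a(2) .
    moreover have "Y a \<le> X a" using D(2) unfolding hsF_def by blast
    ultimately show False using Fr(4)[OF a(1)] by simp
  qed
  define Y' where "Y' = Y(r := Suc (Y r))"
  show ?thesis
  proof (cases "X r = Y r")
    case True
    define X' where "X' = X(r := Suc (X r))"
    have phi: "phi (X, Y) = (X', Y')" unfolding phi_def Let_def
      using True by (simp add: r_def X'_def Y'_def)
    have ii: "ii X' = r" unfolding ii_def
    proof (rule Least_equality)
      show "La r < X' r" using D(1) unfolding X'_def hsF_def by (simp add: le_imp_less_Suc)
      show "\<And>y. La y < X' y \<Longrightarrow> r \<le> y"
      proof (rule ccontr)
        fix y assume "La y < X' y" "\<not> r \<le> y"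
        then show False using below[of y] unfolding X'_def by auto
      qed
    qed
    show ?thesis using True
      by (simp add: phi psi_def Let_def ii, simp add: X'_def Y'_def, metis fun_upd_triv)
  next
    case False
    define X' where "X' = X(Suc r := Suc (X (Suc r)))"
    have XY: "Y r < X r" using False D(2) unfolding hsF_def by (metis le_neq_implies_less)
    have Lr: "La r = X r"
    proof (rule ccontr)
      assume "La r \<noteq> X r"
      then have "La r < X r" using D(1) unfolding hsF_def by (metis le_neq_implies_less)
      then have "X r \<le> Y r" using Fr(6) by blast
      with XY show False by simp
    qed
    have phi: "phi (X, Y) = (X', Y')" unfolding phi_def Let_def
      using False by (simp add: r_def X'_def Y'_def)
    have ii: "ii X' = Suc r" unfolding ii_def
    proof (rule Least_equality)
      show "La (Suc r) < X' (Suc r)" using D(1) unfolding X'_def hsF_def by (simp add: le_imp_less_Suc)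
      show "\<And>y. La y < X' y \<Longrightarrow> Suc r \<le> y"
      proof -
        fix y assume y: "La y < X' y"
        show "Suc r \<le> y"
        proof (rule ccontr)
          assume "\<not> Suc r \<le> y"
          then have "y < r \<or> y = r" by auto
          then show False
          proof
            assume "y < r" then show False using below y unfolding X'_def by auto
          next
            assume "y = r" then show False using y Lr unfolding X'_def by auto
          qed
        qed
      qed
    qed
    have "Y (Suc r) \<le> X (Suc r)" using D(2) unfolding hsF_def by blast
    then have ne: "X' (Suc r) \<noteq> Y' (Suc r)" by (simp add: X'_def Y'_def)
    show ?thesis using ne
      by (simp add: phi psi_def Let_def ii, simp add: X'_def Y'_def)
  qed
qed


lemma psi_facts:
  assumes A: "(X, Y) \<in> RF (Suc m)"
  shows "La (ii X) < X (ii X)" "\<And>a. a < ii X \<Longrightarrow> X a = La a" "ii X < N"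
    "X (Suc (ii X)) \<le> La (ii X)" "\<And>b. Y b < V b \<Longrightarrow> X (ii X) \<le> Y b"
    "\<And>a b. a \<le> b \<Longrightarrow> Y b \<le> Y a" "\<And>a b. a \<le> b \<Longrightarrow> X b \<le> X a"
proof -
  note D = RF_D[OF A]
  have ex: "\<exists>j. La j < X j"
  proof (rule ccontr)
    assume "\<not> ?thesis"
    then have "sz X \<le> sz La" by (intro sz_mono) (auto simp: not_less)
    with D(6) show False by simp
  qed
  then obtain j0 where j0: "La j0 < X j0" by blast
  note I = ii_props[of j0 X, OF j0]
  show 1: "La (ii X) < X (ii X)" using I by auto
  show "\<And>a. a < ii X \<Longrightarrow> X a = La a" using I(2) D(1) unfolding hsF_def
    by (meson le_antisym not_less)
  show "X (Suc (ii X)) \<le> La (ii X)" using D(1) unfolding hsF_def by blast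
  show "\<And>b. Y b < V b \<Longrightarrow> X (ii X) \<le> Y b" using D(5) 1 by blast
  show "\<And>a b. a \<le> b \<Longrightarrow> Y b \<le> Y a" using hsF_anti[OF D(2)] .
  show "\<And>a b. a \<le> b \<Longrightarrow> X b \<le> X a" using hsF_antiA[OF D(2)] .
  show "ii X < N"
  proof (rule ccontr)
    assume "\<not> ii X < N"
    then have NN: "N \<le> ii X" by simp
    show False
    proof (cases "ii X")
      case 0
      with NN have "N = 0" by simp
      then have "sz X = 0" unfolding sz_def by simp
      with D(6) show False by simp
    next
      case (Suc p)
      then have "La p = 0" using La_zero NN by simp
      moreover have "X (ii X) \<le> La p" using D(1) Suc unfolding hsF_def by metis
      ultimately show False using 1 by simp
    qed
  qed
qed

lemma psi_into:
  assumes A: "(X, Y) \<in> RF (Suc m)" and mn: "m < n"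
  shows "psi (X, Y) \<in> RF m"
proof -
  note D = RF_D[OF A]
  note F = psi_facts[OF A]
  define i where "i = ii X"
  have Fi: "La i < X i" "\<And>a. a < i \<Longrightarrow> X a = La a" "i < N"
    "X (Suc i) \<le> La i" "\<And>b. Y b < V b \<Longrightarrow> X i \<le> Y b"
    using F unfolding i_def by auto
  note Yanti = F(6) and Xanti = F(7)
  define X0 where "X0 = X(i := X i - 1)"
  have hXL: "hsF X0 La" using D(1) Fi(1) unfolding hsF_def X0_def
    by (auto simp: le_diff_conv2 intro: le_trans[OF diff_le_self])
  have szX: "Suc (sz X0) = sz X" unfolding X0_def using sz_dec[OF Fi(3)] Fi(1) by simp
  show ?thesis
  proof (cases "X i = Y i")
    case True
    define Y0 where "Y0 = Y(i := Y i - 1)"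
    have psi: "psi (X, Y) = (X0, Y0)" using True
      by (simp add: psi_def Let_def i_def[symmetric] X0_def Y0_def)
    have Vs: "V (Suc i) < X i"
    proof (rule ccontr)
      assume "\<not> V (Suc i) < X i"
      moreover have "Y (Suc i) \<le> X (Suc i)" using D(2) unfolding hsF_def by blast
      ultimately have "Y (Suc i) < V (Suc i)" using Fi(1,4) by simp
      then have "X i \<le> Y (Suc i)" by (rule Fi(5))
      then show False using \<open>Y (Suc i) \<le> X (Suc i)\<close> Fi(1,4) by simp
    qed
    have hXY: "hsF X0 Y0" unfolding hsF_def
    proof (intro allI conjI)
      fix j
      have d: "Y j \<le> X j" "X (Suc j) \<le> Y j" using D(2) unfolding hsF_def by auto
      show "Y0 j \<le> X0 j" using d True unfolding X0_def Y0_def by auto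
      show "X0 (Suc j) \<le> Y0 j"
      proof (cases "j = i")
        case True then show ?thesis using Fi(1,4) \<open>X i = Y i\<close> unfolding X0_def Y0_def by auto
      next
        case False then show ?thesis using d unfolding X0_def Y0_def by auto
      qed
    qed
    have hVY: "hsF V Y0" using D(3) True Vs unfolding hsF_def Y0_def
      by (auto intro: le_trans[OF diff_le_self])
    have c2: "La 0 \<noteq> X0 0 \<longrightarrow> X0 0 = Y0 0"
    proof (cases i)
      case 0 then show ?thesis using True unfolding X0_def Y0_def by simp
    next
      case (Suc p) then show ?thesis using Fi(2)[of 0] unfolding X0_def Y0_def by simp
    qed
    have c3: "\<forall>a b. La a < X0 a \<and> Y0 b < V b \<longrightarrow> X0 a \<le> Y0 b"
    proof (intro allI impI, elim conjE)
      fix a b assume a: "La a < X0 a" and b: "Y0 b < V b"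
      have xa: "X0 a \<le> X i - 1"
      proof (cases "a < i")
        case True then show ?thesis using a Fi(2)[of a] unfolding X0_def by simp
      next
        case False
        show ?thesis
        proof (cases "a = i")
          case True then show ?thesis unfolding X0_def by simp
        next
          case False2: False
          with False have "Suc i \<le> a" by simp
          then have "X a \<le> X (Suc i)" by (rule Xanti)
          then show ?thesis using Fi(1,4) False2 unfolding X0_def by simp
        qed
      qed
      have yb: "X i - 1 \<le> Y0 b"
      proof (cases "b < i")
        case True
        then have "Y i \<le> Y b" using Yanti by simp
        then show ?thesis using True \<open>X i = Y i\<close> unfolding Y0_def by simp
      next
        case False
        show ?thesis
        proof (cases "b = i")
          case True then show ?thesis using \<open>X i = Y i\<close> unfolding Y0_def by simp
        next
          case False2: False
          then have "Y b < V b" using b unfolding Y0_def by simp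
          then have "X i \<le> Y b" by (rule Fi(5))
          then show ?thesis using False2 unfolding Y0_def by simp
        qed
      qed
      show "X0 a \<le> Y0 b" using xa yb by simp
    qed
    have szY: "Suc (sz Y0) = sz Y" unfolding Y0_def using sz_dec[OF Fi(3)] Fi(1) True by simp
    show ?thesis unfolding psi RF_def using hXL hXY hVY c2 c3 szX szY D(6,7,8) mn by auto
  next
    case False
    have i0: "i \<noteq> 0"
    proof
      assume "i = 0"
      then have "La 0 \<noteq> X 0" using Fi(1) by simp
      then have "X 0 = Y 0" by (rule D(4))
      with False \<open>i = 0\<close> show False by simp
    qed
    then obtain p where p: "i = Suc p" by (cases i) auto
    define Y0 where "Y0 = Y(p := Y p - 1)"
    have psi: "psi (X, Y) = (X0, Y0)" using False p
      by (simp add: psi_def Let_def i_def[symmetric] X0_def Y0_def)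
    have YX: "Y i < X i" using False D(2) unfolding hsF_def by (metis le_neq_implies_less)
    have XYp: "X i \<le> Y p" using D(2) p unfolding hsF_def by metis
    have Vs: "V i < Y p"
    proof (rule ccontr)
      assume "\<not> V i < Y p"
      moreover have "V i \<le> Y p" using D(3) p unfolding hsF_def by metis
      ultimately have "Y i < V i" using YX XYp by simp
      then have "X i \<le> Y i" by (rule Fi(5))
      then show False using YX by simp
    qed
    have hXY: "hsF X0 Y0" unfolding hsF_def
    proof (intro allI conjI)
      fix j
      have d: "Y j \<le> X j" "X (Suc j) \<le> Y j" using D(2) unfolding hsF_def by auto
      show "Y0 j \<le> X0 j" using d YX p unfolding X0_def Y0_def by auto
      show "X0 (Suc j) \<le> Y0 j"
      proof (cases "j = p")
        case True then show ?thesis using XYp p unfolding X0_def Y0_def by auto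
      next
        case False then show ?thesis using d p unfolding X0_def Y0_def by auto
      qed
    qed
    have hVY: "hsF V Y0" using D(3) Vs p unfolding hsF_def Y0_def
      by (auto intro: le_trans[OF diff_le_self])
    have c2: "La 0 \<noteq> X0 0 \<longrightarrow> X0 0 = Y0 0"
      using Fi(2)[of 0] p unfolding X0_def Y0_def by simp
    have c3: "\<forall>a b. La a < X0 a \<and> Y0 b < V b \<longrightarrow> X0 a \<le> Y0 b"
    proof (intro allI impI, elim conjE)
      fix a b assume a: "La a < X0 a" and b: "Y0 b < V b"
      have xa: "X0 a \<le> X i - 1"
      proof (cases "a < i")
        case True then show ?thesis using a Fi(2)[of a] unfolding X0_def by simp
      next
        case False
        show ?thesis
        proof (cases "a = i")
          case True then show ?thesis unfolding X0_def by simp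
        next
          case False2: False
          with False have "Suc i \<le> a" by simp
          then have "X a \<le> X (Suc i)" by (rule Xanti)
          then show ?thesis using Fi(1,4) False2 unfolding X0_def by simp
        qed
      qed
      have yb: "X i - 1 \<le> Y0 b"
      proof (cases "b < p")
        case True
        then have "Y p \<le> Y b" using Yanti by simp
        then show ?thesis using True XYp unfolding Y0_def by simp
      next
        case False
        show ?thesis
        proof (cases "b = p")
          case True then show ?thesis using XYp unfolding Y0_def by simp
        next
          case False2: False
          then have "Y b < V b" using b unfolding Y0_def by simp
          then have "X i \<le> Y b" by (rule Fi(5))
          then show ?thesis using False2 unfolding Y0_def by simp
        qed
      qed
      show "X0 a \<le> Y0 b" using xa yb by simp
    qed
    have pN: "p < N" using Fi(3) p by simp
    have szY: "Suc (sz Y0) = sz Y" unfolding Y0_def using sz_dec[OF pN] Fi(1) XYp by simp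
    show ?thesis unfolding psi RF_def using hXL hXY hVY c2 c3 szX szY D(6,7,8) mn by auto
  qed
qed


lemma phi_psi:
  assumes A: "(X, Y) \<in> RF (Suc m)" and mn: "m < n"
  shows "phi (psi (X, Y)) = (X, Y)"
proof -
  note D = RF_D[OF A]
  note F = psi_facts[OF A]
  define i where "i = ii X"
  have Fi: "La i < X i" "\<And>a. a < i \<Longrightarrow> X a = La a" "i < N"
    "X (Suc i) \<le> La i" "\<And>b. Y b < V b \<Longrightarrow> X i \<le> Y b"
    using F unfolding i_def by auto
  note Yanti = F(6) and Xanti = F(7)
  have bV: "\<And>b. Y b \<le> V b" using D(3) unfolding hsF_def by auto
  have bX: "\<And>b. Y b \<le> X b" using D(2) unfolding hsF_def by auto
  have b1: "\<And>b. V b = 0 \<Longrightarrow> b \<le> N \<Longrightarrow> True" by simp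
  define X0 where "X0 = X(i := X i - 1)"
  show ?thesis
  proof (cases "X i = Y i")
    case True
    define Y0 where "Y0 = Y(i := Y i - 1)"
    have psi: "psi (X, Y) = (X0, Y0)" using True
      by (simp add: psi_def Let_def i_def[symmetric] X0_def Y0_def)
    have rr: "rr Y0 = i" unfolding rr_def
    proof (rule Greatest_equality)
      show "Y0 i < V i" using bV[of i] Fi(1) True unfolding Y0_def by simp
      show "\<And>y. Y0 y < V y \<Longrightarrow> y \<le> i"
      proof (rule ccontr)
        fix y assume y: "Y0 y < V y" "\<not> y \<le> i"
        then have "Y y < V y" unfolding Y0_def by simp
        then have "X i \<le> Y y" by (rule Fi(5))
        moreover have "Y y \<le> X (Suc i)" using bX[of y] Xanti[of "Suc i" y] y(2) by simp
        ultimately show False using Fi(1,4) by simp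
      qed
    qed
    show ?thesis using True Fi(1)
      by (simp add: psi phi_def Let_def rr, simp add: X0_def Y0_def, metis fun_upd_triv)
  next
    case False
    have i0: "i \<noteq> 0"
    proof
      assume "i = 0"
      then have "La 0 \<noteq> X 0" using Fi(1) by simp
      then have "X 0 = Y 0" by (rule D(4))
      with False \<open>i = 0\<close> show False by simp
    qed
    then obtain p where p: "i = Suc p" by (cases i) auto
    define Y0 where "Y0 = Y(p := Y p - 1)"
    have psi: "psi (X, Y) = (X0, Y0)" using False p
      by (simp add: psi_def Let_def i_def[symmetric] X0_def Y0_def)
    have YX: "Y i < X i" using False bX[of i] by simp
    have XYp: "X i \<le> Y p" using D(2) p unfolding hsF_def by metis
    have rr: "rr Y0 = p" unfolding rr_def
    proof (rule Greatest_equality)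
      show "Y0 p < V p" using bV[of p] Fi(1) XYp unfolding Y0_def by simp
      show "\<And>y. Y0 y < V y \<Longrightarrow> y \<le> p"
      proof (rule ccontr)
        fix y assume y: "Y0 y < V y" "\<not> y \<le> p"
        then have "Y y < V y" unfolding Y0_def by simp
        then have "X i \<le> Y y" by (rule Fi(5))
        moreover have "Y y \<le> Y i" using Yanti[of i y] y(2) p by simp
        ultimately show False using YX by simp
      qed
    qed
    have ne: "X0 p \<noteq> Y0 p" using bX[of p] XYp Fi(1) p unfolding X0_def Y0_def by simp
    have yp: "Y(p := Suc (Y p - Suc 0)) = Y"
    proof -
      have "Suc (Y p - Suc 0) = Y p" using XYp Fi(1) by linarith
      then show ?thesis by (metis fun_upd_triv)
    qed
    show ?thesis using ne Fi(1) p
      by (simp add: psi phi_def Let_def rr, simp add: X0_def Y0_def yp)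
  qed
qed

lemma step_bij: "m < n \<Longrightarrow> bij_betw phi (RF m) (RF (Suc m))"
  apply (rule bij_betw_byWitness[where f' = psi])
  using psi_phi phi_psi phi_into psi_into by auto


lemma base_bij: "bij_betw (\<lambda>Y. (La, Y)) LF (RF 0)"
proof (rule bij_betw_byWitness[where f' = snd])
  have LL: "hsF La La" unfolding hsF_def using La_anti by auto
  show "\<forall>a\<in>LF. snd (La, a) = a" by simp
  show "(\<lambda>Y. (La, Y)) ` LF \<subseteq> RF 0"
    using LL unfolding LF_def RF_def by auto
  show "\<forall>a'\<in>RF 0. (La, snd a') = a'"
  proof
    fix p assume p: "p \<in> RF 0"
    obtain X Y where pXY: "p = (X, Y)" by (cases p)
    note D = RF_D[OF p[unfolded pXY]]
    have "X = La"
    proof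
      fix i
      show "X i = La i"
      proof (cases "i < N")
        case True
        show ?thesis
          using sum_mono_inv[of La "{..<N}" X i] D(1,6) True unfolding sz_def hsF_def
          by auto
      next
        case False
        then obtain j where j: "i = Suc j" "N \<le> Suc j" using N_pos by (cases i) auto
        have "X i \<le> La j" using D(1) j unfolding hsF_def by auto
        then show ?thesis using La_zero[OF j(2)] La_zero[of i] j by auto
      qed
    qed
    then show "(La, snd p) = p" using pXY by simp
  qed
  show "snd ` RF 0 \<subseteq> LF"
  proof
    fix Y assume "Y \<in> snd ` RF 0"
    then obtain X where p: "(X, Y) \<in> RF 0" by force
    note D = RF_D[OF p]
    have "X = La"
    proof
      fix i
      show "X i = La i"
      proof (cases "i < N")
        case True
        show ?thesis
          using sum_mono_inv[of La "{..<N}" X i] D(1,6) True unfolding sz_def hsF_def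
          by auto
      next
        case False
        then obtain j where j: "i = Suc j" "N \<le> Suc j" using N_pos by (cases i) auto
        have "X i \<le> La j" using D(1) j unfolding hsF_def by auto
        then show ?thesis using La_zero[OF j(2)] La_zero[of i] j by auto
      qed
    qed
    then show "Y \<in> LF" using D unfolding LF_def by auto
  qed
qed

lemma iter_bij: "m \<le> n \<Longrightarrow> \<exists>h. bij_betw h LF (RF m)"
proof (induction m)
  case 0 then show ?case using base_bij by blast
next
  case (Suc m)
  then obtain h where "bij_betw h LF (RF m)" by auto
  moreover have "bij_betw phi (RF m) (RF (Suc m))" using Suc.prems by (intro step_bij) simp
  ultimately show ?case using bij_betw_trans by blast
qed

end

lemma part_anti: "is_partition la \<Longrightarrow> part la (Suc i) \<le> part la i"
  unfolding is_partition_def part_def sorted_wrt_iff_nth_less by auto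

lemma part_pos: "is_partition la \<Longrightarrow> i < length la \<Longrightarrow> 0 < part la i"
  unfolding is_partition_def part_def by auto

lemma part_len: "is_partition la \<Longrightarrow> (\<And>i. M \<le> i \<Longrightarrow> part la i = 0) \<Longrightarrow> length la \<le> M"
  using part_pos by (metis not_le less_irrefl)

lemma part_inj: "is_partition la \<Longrightarrow> is_partition mu \<Longrightarrow> part la = part mu \<Longrightarrow> la = mu"
proof -
  assume a: "is_partition la" "is_partition mu" "part la = part mu"
  have "length la \<le> length mu" using part_len[OF a(1), of "length mu"] a(3)
    by (simp add: part_def)
  moreover have "length mu \<le> length la" using part_len[OF a(2), of "length la"] a(3)
    by (metis part_def not_le)
  ultimately have L: "length la = length mu" by simp
  show "la = mu"
  proof (rule nth_equalityI[OF L])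
    fix i assume "i < length la"
    then show "la ! i = mu ! i" using fun_cong[OF a(3), of i] L by (simp add: part_def)
  qed
qed

lemma part_surj:
  assumes anti: "\<And>i. f (Suc i) \<le> f i" and z: "\<And>i. M \<le> i \<Longrightarrow> f i = (0::nat)"
  shows "\<exists>la. is_partition la \<and> part la = f"
proof -
  define K where "K = (LEAST k. f k = 0)"
  have fK: "f K = 0" unfolding K_def by (rule LeastI[of _ M]) (simp add: z)
  have pos: "\<And>i. i < K \<Longrightarrow> 0 < f i" unfolding K_def using not_less_Least by blast
  have zero: "\<And>i. K \<le> i \<Longrightarrow> f i = 0" using lift_Suc_antimono_le[of f, OF anti] fK
    by (metis le_zero_eq)
  define la where "la = map f [0..<K]"
  have "part la = f"
  proof
    fix i show "part la i = f i" unfolding part_def la_def using zero by auto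
  qed
  moreover have "is_partition la"
    unfolding is_partition_def la_def sorted_wrt_iff_nth_less
    using pos lift_Suc_antimono_le[of f, OF anti] by (auto simp: in_set_conv_nth)
  ultimately show ?thesis by blast
qed

lemma size_part_sum: "length la \<le> M \<Longrightarrow> size_part la = sum (part la) {..<M}"
proof -
  assume M: "length la \<le> M"
  have "size_part la = (\<Sum>i = 0..<length la. la ! i)" unfolding size_part_def by (rule sum_list_sum_nth)
  also have "\<dots> = sum (part la) {..<length la}" by (rule sum.cong) (auto simp: part_def)
  also have "\<dots> = sum (part la) {..<M}"
    by (rule sum.mono_neutral_left) (use M in \<open>auto simp: part_def\<close>)
  finally show ?thesis .
qed

lemma hs_iff: "is_partition la \<Longrightarrow> is_partition mu \<Longrightarrow>
  horizontal_strip la mu \<longleftrightarrow> hsF (part la) (part mu)"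
proof -
  assume pl: "is_partition la" and pm: "is_partition mu"
  show ?thesis
  proof
    assume h: "horizontal_strip la mu"
    show "hsF (part la) (part mu)" unfolding hsF_def
    proof (intro allI conjI)
      fix i
      show "part mu i \<le> part la i" using h unfolding horizontal_strip_def contained_def by auto
      show "part la (Suc i) \<le> part mu i"
      proof (rule ccontr)
        assume c: "\<not> part la (Suc i) \<le> part mu i"
        let ?j = "part la (Suc i)"
        have "(i, ?j) \<in> skew_boxes la mu" using c part_anti[OF pl, of i] unfolding skew_boxes_def by auto
        moreover have "(Suc i, ?j) \<in> skew_boxes la mu" using c part_anti[OF pm, of i]
          unfolding skew_boxes_def by auto
        ultimately have "i = Suc i" using h unfolding horizontal_strip_def by blast
        then show False by simp
      qed
    qed
  next
    assume h: "hsF (part la) (part mu)"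
    have anti: "\<And>a b. a \<le> b \<Longrightarrow> part la b \<le> part la a"
      using lift_Suc_antimono_le[of "part la"] part_anti[OF pl] by blast
    show "horizontal_strip la mu" unfolding horizontal_strip_def contained_def
    proof (intro conjI allI impI)
      fix i show "part mu i \<le> part la i" using h unfolding hsF_def by auto
    next
      fix i j i' j'
      assume b: "(i, j) \<in> skew_boxes la mu \<and> (i', j') \<in> skew_boxes la mu \<and> j = j'"
      show "i = i'"
      proof (rule ccontr)
        assume "i \<noteq> i'"
        then consider "i < i'" | "i' < i" by linarith
        then show False
        proof cases
          case 1
          have "part la i' \<le> part la (Suc i)" using anti 1 by simp
          moreover have "part la (Suc i) \<le> part mu i" using h unfolding hsF_def by auto
          ultimately show False using b unfolding skew_boxes_def by auto
        next
          case 2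
          have "part la i \<le> part la (Suc i')" using anti 2 by simp
          moreover have "part la (Suc i') \<le> part mu i'" using h unfolding hsF_def by auto
          ultimately show False using b unfolding skew_boxes_def by auto
        qed
      qed
    qed
  qed
qed

lemma c3_iff:
  "(skew_boxes nu mum \<noteq> {} \<and> skew_boxes muo la \<noteq> {} \<longrightarrow>
        (\<forall>b\<in>skew_boxes nu mum. \<forall>c\<in>skew_boxes muo la. snd c < snd b)) \<longleftrightarrow>
   (\<forall>a b. part la a < part muo a \<and> part mum b < part nu b \<longrightarrow> part muo a \<le> part mum b)"
proof
  assume h: "skew_boxes nu mum \<noteq> {} \<and> skew_boxes muo la \<noteq> {} \<longrightarrow>
        (\<forall>b\<in>skew_boxes nu mum. \<forall>c\<in>skew_boxes muo la. snd c < snd b)"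
  show "\<forall>a b. part la a < part muo a \<and> part mum b < part nu b \<longrightarrow> part muo a \<le> part mum b"
  proof (intro allI impI, elim conjE)
    fix a b assume a: "part la a < part muo a" and b: "part mum b < part nu b"
    have c: "(a, part muo a) \<in> skew_boxes muo la" using a unfolding skew_boxes_def by auto
    have d: "(b, Suc (part mum b)) \<in> skew_boxes nu mum" using b unfolding skew_boxes_def by auto
    from h c d have "snd (a, part muo a) < snd (b, Suc (part mum b))" by blast
    then show "part muo a \<le> part mum b" by simp
  qed
next
  assume h: "\<forall>a b. part la a < part muo a \<and> part mum b < part nu b \<longrightarrow> part muo a \<le> part mum b"
  show "skew_boxes nu mum \<noteq> {} \<and> skew_boxes muo la \<noteq> {} \<longrightarrow>
        (\<forall>b\<in>skew_boxes nu mum. \<forall>c\<in>skew_boxes muo la. snd c < snd b)"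
  proof (intro impI ballI)
    fix b c assume b: "b \<in> skew_boxes nu mum" and c: "c \<in> skew_boxes muo la"
    obtain b1 b2 where bb: "b = (b1, b2)" by (cases b)
    obtain c1 c2 where cc: "c = (c1, c2)" by (cases c)
    have "part muo c1 \<le> part mum b1" using h b c unfolding bb cc skew_boxes_def by auto
    then show "snd c < snd b" using b c unfolding bb cc skew_boxes_def by auto
  qed
qed




lemma part_zero: "length la \<le> i \<Longrightarrow> part la i = 0"
  unfolding part_def by simp

lemma zb1: "hsF A B \<Longrightarrow> (\<And>i. M \<le> i \<Longrightarrow> A i = 0) \<Longrightarrow> M \<le> i \<Longrightarrow> B i = (0::nat)"
  unfolding hsF_def by (metis le_zero_eq)

lemma zb2: "hsF A B \<Longrightarrow> (\<And>i. M \<le> i \<Longrightarrow> B i = 0) \<Longrightarrow> Suc M \<le> i \<Longrightarrow> A i = (0::nat)"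
proof -
  assume h: "hsF A B" and z: "\<And>i. M \<le> i \<Longrightarrow> B i = 0" and i: "Suc M \<le> i"
  then obtain j where j: "i = Suc j" "M \<le> j" by (cases i) auto
  have "A (Suc j) \<le> B j" using h unfolding hsF_def by blast
  then show "A i = 0" using z[OF j(2)] j(1) by simp
qed



theorem mainTheorem9:
  fixes la nu :: "nat list" and k l m1 :: nat
  assumes "is_partition la" and "is_partition nu" and "l + m1 \<le> k"
  shows "\<exists>f. bij_betw f
     {mu. sp_bumping la mu nu \<and> skew_size la mu = l \<and> skew_size nu mu = k - l}
     {(muo, mum). spo_bumping la muo mum nu \<and> skew_size muo la = m1 \<and>
        skew_size muo mum = l \<and> skew_size nu mum = k - l - m1}"
proof -
  note pla = assms(1) and pnu = assms(2)
  define N where "N = Suc (length la + length nu)"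
  interpret F: fw "part la" "part nu" N l "k - l"
  proof
    show "\<And>i. part la (Suc i) \<le> part la i" using part_anti[OF pla] .
    show "\<And>i. N \<le> Suc i \<Longrightarrow> part la i = 0" unfolding N_def part_def by auto
    show "\<And>i. N \<le> i \<Longrightarrow> part nu i = 0" unfolding N_def part_def by auto
    show "0 < N" unfolding N_def by simp
  qed
  have szla: "size_part la = F.sz (part la)" unfolding F.sz_def
    by (rule size_part_sum) (simp add: N_def)
  have sznu: "size_part nu = F.sz (part nu)" unfolding F.sz_def
    by (rule size_part_sum) (simp add: N_def)
  have szX: "\<And>x. is_partition x \<Longrightarrow> (\<And>i. Suc (length la) \<le> i \<Longrightarrow> part x i = 0) \<Longrightarrow>
      size_part x = F.sz (part x)"
  proof -
    fix x assume x: "is_partition x" "\<And>i. Suc (length la) \<le> i \<Longrightarrow> part x i = 0"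
    have "length x \<le> Suc (length la)" using part_len[OF x(1)] x(2) by blast
    then show "size_part x = F.sz (part x)" unfolding F.sz_def
      by (intro size_part_sum) (simp add: N_def)
  qed
  define Lset where "Lset = {mu. sp_bumping la mu nu \<and> skew_size la mu = l \<and> skew_size nu mu = k - l}"
  define Rset where "Rset = {(muo, mum). spo_bumping la muo mum nu \<and> skew_size muo la = m1 \<and>
        skew_size muo mum = l \<and> skew_size nu mum = k - l - m1}"
  have L1: "\<And>mu. mu \<in> Lset \<longleftrightarrow> is_partition mu \<and> part mu \<in> F.LF"
  proof
    fix mu assume "mu \<in> Lset"
    then have a: "sp_bumping la mu nu" "skew_size la mu = l" "skew_size nu mu = k - l"
      unfolding Lset_def by auto
    then have pm: "is_partition mu" and h1: "hsF (part la) (part mu)" and h2: "hsF (part nu) (part mu)"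
      unfolding sp_bumping_def using hs_iff pla pnu by auto
    have z: "\<And>i. Suc (length la) \<le> i \<Longrightarrow> part mu i = 0"
      using zb1[OF h1, of "length la"] part_zero[of la] by simp
    have sm: "size_part mu = F.sz (part mu)" using szX[OF pm z] .
    have "F.sz (part mu) \<le> F.sz (part la)" "F.sz (part mu) \<le> F.sz (part nu)"
      using h1 h2 unfolding hsF_def by (auto intro: F.sz_mono)
    then show "is_partition mu \<and> part mu \<in> F.LF"
      using pm h1 h2 a(2,3) unfolding F.LF_def skew_size_def sm szla sznu by auto
  next
    fix mu assume "is_partition mu \<and> part mu \<in> F.LF"
    then have pm: "is_partition mu" and h1: "hsF (part la) (part mu)" and h2: "hsF (part nu) (part mu)"
      and s: "F.sz (part la) = F.sz (part mu) + l" "F.sz (part nu) = F.sz (part mu) + (k - l)"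
      unfolding F.LF_def by auto
    have z: "\<And>i. Suc (length la) \<le> i \<Longrightarrow> part mu i = 0"
      using zb1[OF h1, of "length la"] part_zero[of la] by simp
    have sm: "size_part mu = F.sz (part mu)" using szX[OF pm z] .
    have c: "contained mu la" "contained mu nu" using h1 h2 unfolding contained_def hsF_def by auto
    have hs: "horizontal_strip la mu" "horizontal_strip nu mu"
      using h1 h2 hs_iff[OF pla pm] hs_iff[OF pnu pm] by auto
    show "mu \<in> Lset" unfolding Lset_def sp_bumping_def skew_size_def mem_Collect_eq sm szla sznu
      using pm pla pnu c hs s by simp
  qed
  have R1: "\<And>x y. (x, y) \<in> Rset \<longleftrightarrow> is_partition x \<and> is_partition y \<and> (part x, part y) \<in> F.RF m1"
  proof
    fix x y assume "(x, y) \<in> Rset"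
    then have a: "spo_bumping la x y nu" "skew_size x la = m1" "skew_size x y = l"
      "skew_size nu y = k - l - m1"
      unfolding Rset_def by auto
    then have px: "is_partition x" and py: "is_partition y"
      and h1: "hsF (part x) (part la)" and h2: "hsF (part x) (part y)" and h3: "hsF (part nu) (part y)"
      and c2: "part la 0 \<noteq> part x 0 \<longrightarrow> part x 0 = part y 0"
      and c3: "\<forall>a b. part la a < part x a \<and> part y b < part nu b \<longrightarrow> part x a \<le> part y b"
      unfolding spo_bumping_def using hs_iff pla pnu c3_iff by auto
    have zx: "\<And>i. Suc (length la) \<le> i \<Longrightarrow> part x i = 0"
      using zb2[OF h1, of "length la"] part_zero[of la] by simp
    have zy: "\<And>i. Suc (length la) \<le> i \<Longrightarrow> part y i = 0"
      using zb1[OF h2 zx] by simp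
    have sx: "size_part x = F.sz (part x)" using szX[OF px zx] .
    have sy: "size_part y = F.sz (part y)" using szX[OF py zy] .
    have "F.sz (part la) \<le> F.sz (part x)" "F.sz (part y) \<le> F.sz (part x)" "F.sz (part y) \<le> F.sz (part nu)"
      using h1 h2 h3 unfolding hsF_def by (auto intro: F.sz_mono)
    then show "is_partition x \<and> is_partition y \<and> (part x, part y) \<in> F.RF m1"
      using px py h1 h2 h3 c2 c3 a(2,3,4) unfolding F.RF_def skew_size_def sx sy szla sznu by auto
  next
    fix x y assume "is_partition x \<and> is_partition y \<and> (part x, part y) \<in> F.RF m1"
    then have px: "is_partition x" and py: "is_partition y" and r: "(part x, part y) \<in> F.RF m1" by auto
    note D = F.RF_D[OF r]
    have zx: "\<And>i. Suc (length la) \<le> i \<Longrightarrow> part x i = 0"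
      using zb2[OF D(1), of "length la"] part_zero[of la] by simp
    have zy: "\<And>i. Suc (length la) \<le> i \<Longrightarrow> part y i = 0"
      using zb1[OF D(2) zx] by simp
    have sx: "size_part x = F.sz (part x)" using szX[OF px zx] .
    have sy: "size_part y = F.sz (part y)" using szX[OF py zy] .
    have hh: "horizontal_strip x la" "horizontal_strip x y" "horizontal_strip nu y"
      using D(1,2,3) hs_iff[OF px pla] hs_iff[OF px py] hs_iff[OF pnu py] by auto
    have cc: "contained la x" "contained y x" "contained y nu"
      using D(1,2,3) unfolding contained_def hsF_def by auto
    have c3: "skew_boxes nu y \<noteq> {} \<and> skew_boxes x la \<noteq> {} \<longrightarrow>
        (\<forall>b\<in>skew_boxes nu y. \<forall>c\<in>skew_boxes x la. snd c < snd b)"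
      using c3_iff[of nu y x la] D(5) by blast
    show "(x, y) \<in> Rset" unfolding Rset_def spo_bumping_def skew_size_def mem_Collect_eq
        case_prod_conv sx sy szla sznu
      using px py pla pnu hh cc c3 D(4) D(6,7,8) by simp
  qed
  have bL: "bij_betw part Lset F.LF"
    unfolding bij_betw_def
  proof
    show "inj_on part Lset" unfolding inj_on_def using L1 part_inj by blast
    show "part ` Lset = F.LF"
    proof
      show "part ` Lset \<subseteq> F.LF" using L1 by auto
      show "F.LF \<subseteq> part ` Lset"
      proof
        fix Y assume Y: "Y \<in> F.LF"
        then have h1: "hsF (part la) Y" unfolding F.LF_def by auto
        have "\<exists>mu. is_partition mu \<and> part mu = Y"
        proof (rule part_surj[of Y "length la"])
          show "\<And>i. Y (Suc i) \<le> Y i" using h1 part_anti[OF pla] unfolding hsF_def by (metis le_trans)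
          show "\<And>i. length la \<le> i \<Longrightarrow> Y i = 0" using h1 unfolding hsF_def part_def
            by (metis le_zero_eq not_le)
        qed
        then obtain mu where "is_partition mu" "part mu = Y" by blast
        then show "Y \<in> part ` Lset" using L1 Y by blast
      qed
    qed
  qed
  have bR: "bij_betw (\<lambda>(x, y). (part x, part y)) Rset (F.RF m1)"
    unfolding bij_betw_def
  proof
    show "inj_on (\<lambda>(x, y). (part x, part y)) Rset"
      unfolding inj_on_def using R1 part_inj by auto
    show "(\<lambda>(x, y). (part x, part y)) ` Rset = F.RF m1"
    proof
      show "(\<lambda>(x, y). (part x, part y)) ` Rset \<subseteq> F.RF m1" using R1 by auto
      show "F.RF m1 \<subseteq> (\<lambda>(x, y). (part x, part y)) ` Rset"
      proof
        fix p assume p: "p \<in> F.RF m1"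
        obtain X Y where pXY: "p = (X, Y)" by (cases p)
        note D = F.RF_D[OF p[unfolded pXY]]
        have zX: "\<And>i. Suc (length la) \<le> i \<Longrightarrow> X i = 0"
          using zb2[OF D(1), of "length la"] part_zero[of la] by simp
        have "\<exists>x. is_partition x \<and> part x = X"
        proof (rule part_surj[of X "Suc (length la)"])
          show "\<And>i. X (Suc i) \<le> X i" using D(1) unfolding hsF_def by (metis le_trans)
        qed (rule zX)
        then obtain x where x: "is_partition x" "part x = X" by blast
        have "\<exists>y. is_partition y \<and> part y = Y"
        proof (rule part_surj[of Y "Suc (length la)"])
          show "\<And>i. Y (Suc i) \<le> Y i" using D(2) unfolding hsF_def by (metis le_trans)
          show "\<And>i. Suc (length la) \<le> i \<Longrightarrow> Y i = 0" using zb1[OF D(2) zX] by simp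
        qed
        then obtain y where y: "is_partition y" "part y = Y" by blast
        have "(x, y) \<in> Rset" using R1 x y p pXY by auto
        then show "p \<in> (\<lambda>(x, y). (part x, part y)) ` Rset" using x y pXY by force
      qed
    qed
  qed
  have "m1 \<le> k - l" using assms(3) by simp
  then obtain h where h: "bij_betw h F.LF (F.RF m1)" using F.iter_bij by blast
  have "bij_betw (the_inv_into Rset (\<lambda>(x, y). (part x, part y)) \<circ> (h \<circ> part)) Lset Rset"
    by (rule bij_betw_trans[OF bij_betw_trans[OF bL h] bij_betw_the_inv_into[OF bR]])
  then show ?thesis unfolding Lset_def Rset_def by blast
qed



end
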